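(* Let $n\ge 1$, $\lambda\in\mathbb{R}$, $t\ge 0$, and let $E_1,\dots,E_{n+1}$ and $k_1,\dots,k_n$ be complex numbers. Assume that $E_{p(j)}-E_j+i\lambda k(j;G)\neq 0$ for every $G\in\mathcal{G}_n$ and every $1\le j\le n$ (notation as in the context). Then $$\int_{0\le t_n\le\cdots\le t_1\le t} dt_1\cdots dt_n\,\prod_{j=1}^n e^{-it_j(E_{j+1}-E_j+i\lambda k_j)} =\sum_{G\in\mathcal{G}_n}\sigma(G)\left(\prod_{j=1}^n\frac{i}{E_{p(j)}-E_j+i\lambda k(j;G)}\right)\left(e^{-it\,(E_{p(1)}-E_1+i\lambda k(1;G))}-1\right),$$ where $p(j)=p_G(j)$.
   Context: $\mathcal{G}_n$ is the set of directed graphs $G$ on the vertex set $\{1,\dots,n+1\}$ that are in bijection with compositions of $n$ (finite ordered sequences $(c_1,\dots,c_r)$ of positive integers with $c_1+\dots+c_r=n$) as follows. Given a composition with partial sums $s_0=0<s_1<\dots<s_r=n$, every vertex $j$ with $s_{i-1}<j\le s_i$ receives exactly one bond, coming from the vertex $p(j):=s_i+1$; no other bonds are present. Hence $|\mathcal{G}_n|=2^{n-1}$. The sign of $G$ is $\sigma(G)=(-1)^{r-1}$, where $r$ is the number of parts of the composition. Equivalently, the signs are defined inductively: the unique graph in $\mathcal{G}_1$ has sign $+1$; from $G$ one obtains a graph with one more vertex either by adding a new block of size one at the start (sign flips) or by enlarging the first block by one (sign unchanged). For $1\le j\le n$, set $k(j;G)=\sum_{m=j}^{p(j)-1}k_m$.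 *)

theory Defs
  imports "HOL-Analysis.Analysis"
begin

definition compositions :: "nat \<Rightarrow> nat list set" where
  "compositions n = {c. (\<forall>x\<in>set c. 0 < x) \<and> sum_list c = n}"

definition partial_sums :: "nat list \<Rightarrow> nat set" where
  "partial_sums c = {sum_list (take i c) | i. i \<le> length c}"

definition comp_p :: "nat list \<Rightarrow> nat \<Rightarrow> nat" where
  "comp_p c j = (LEAST s. s \<in> partial_sums c \<and> j \<le> s) + 1"

text \<open>The directed graph G on vertices 1..n+1 associated with a composition:
  bonds from p(j) to j for 1 \<le> j \<le> n.\<close>
definition comp_graph :: "nat \<Rightarrow> nat list \<Rightarrow> (nat \<times> nat) set" where
  "comp_graph n c = {(comp_p c j, j) | j. 1 \<le> j \<and> j \<le> n}"

definition comp_sign :: "nat list \<Rightarrow> complex" where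
  "comp_sign c = (-1) ^ (length c - 1)"

definition comp_k :: "(nat \<Rightarrow> complex) \<Rightarrow> nat list \<Rightarrow> nat \<Rightarrow> complex" where
  "comp_k k c j = (\<Sum>m = j..comp_p c j - 1. k m)"

definition ordered_simplex :: "nat \<Rightarrow> real \<Rightarrow> (nat \<Rightarrow> real) set" where
  "ordered_simplex n t = {x \<in> space (PiM {1..n} (\<lambda>_. lborel)).
      0 \<le> x n \<and> (\<forall>j. 1 \<le> j \<and> j < n \<longrightarrow> x (Suc j) \<le> x j) \<and> x 1 \<le> t}"

end

theory Submission
  imports Defs
begin

fun q :: "nat list \<Rightarrow> nat \<Rightarrow> nat" where
  "q [] m = 0"
| "q (b # c) m = (if m \<le> b then b else b + q c (m - b))"

lemma q_le_sum: "q c m \<le> sum_list c"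
  by (induction c arbitrary: m) auto

lemma partial_sums_Cons: "partial_sums (b # c) = insert 0 ((+) b ` partial_sums c)"
proof -
  have "partial_sums (b # c) = {sum_list (take i (b # c)) | i. i \<le> Suc (length c)}"
    by (simp add: partial_sums_def)
  also have "\<dots> = insert 0 ((+) b ` partial_sums c)"
    unfolding partial_sums_def
  proof (intro set_eqI iffI)
    fix x assume "x \<in> {sum_list (take i (b # c)) | i. i \<le> Suc (length c)}"
    then obtain i where "x = sum_list (take i (b # c))" "i \<le> Suc (length c)" by auto
    then show "x \<in> insert 0 ((+) b ` {sum_list (take i c) |i. i \<le> length c})"
      by (cases i) auto
  next
    fix x assume "x \<in> insert 0 ((+) b ` {sum_list (take i c) |i. i \<le> length c})"
    then show "x \<in> {sum_list (take i (b # c)) | i. i \<le> Suc (length c)}"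
    proof
      assume "x = 0" then show ?thesis by (auto intro!: exI[of _ 0])
    next
      assume "x \<in> (+) b ` {sum_list (take i c) |i. i \<le> length c}"
      then obtain i where "x = b + sum_list (take i c)" "i \<le> length c" by auto
      then show ?thesis by (auto intro!: exI[of _ "Suc i"])
    qed
  qed
  finally show ?thesis .
qed

lemma q_props:
  assumes "\<forall>x\<in>set c. 0 < x" "1 \<le> m" "m \<le> sum_list c"
  shows "q c m \<in> partial_sums c \<and> m \<le> q c m \<and> (\<forall>s\<in>partial_sums c. m \<le> s \<longrightarrow> q c m \<le> s)"
  using assms
proof (induction c arbitrary: m)
  case Nil then show ?case by simp
next
  case (Cons b c)
  show ?case
  proof (cases "m \<le> b")
    case True
    have "0 \<in> partial_sums c" by (auto simp: partial_sums_def intro: exI[of _ 0])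
    then have "b \<in> partial_sums (b # c)"
      unfolding partial_sums_Cons by (auto intro!: image_eqI[of _ _ 0])
    moreover have "\<forall>s\<in>partial_sums (b # c). m \<le> s \<longrightarrow> b \<le> s"
      unfolding partial_sums_Cons using Cons.prems by auto
    ultimately show ?thesis using True by simp
  next
    case False
    have IH: "q c (m - b) \<in> partial_sums c \<and> m - b \<le> q c (m - b) \<and>
      (\<forall>s\<in>partial_sums c. m - b \<le> s \<longrightarrow> q c (m - b) \<le> s)"
      using Cons.prems False by (intro Cons.IH) auto
    show ?thesis using False IH Cons.prems
      unfolding partial_sums_Cons by auto
  qed
qed

lemma comp_p_q:
  assumes "c \<in> compositions n" "1 \<le> m" "m \<le> n"
  shows "comp_p c m = Suc (q c m)"
proof -
  have P: "q c m \<in> partial_sums c \<and> m \<le> q c m \<and> (\<forall>s\<in>partial_sums c. m \<le> s \<longrightarrow> q c m \<le> s)"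
    using assms by (intro q_props) (auto simp: compositions_def)
  have "(LEAST s. s \<in> partial_sums c \<and> m \<le> s) = q c m"
    by (rule Least_equality) (use P in auto)
  then show ?thesis unfolding comp_p_def by simp
qed

lemma q_ge: 
  assumes "\<forall>x\<in>set c. 0 < x" "1 \<le> m" "m \<le> sum_list c"
  shows "m \<le> q c m"
  using q_props[OF assms] by simp

lemma q_replicate: "r < m \<Longrightarrow> q (replicate r 1 @ d) m = r + q d (m - r)"
proof (induction r arbitrary: m)
  case 0 then show ?case by simp
next
  case (Suc r)
  have "q (replicate (Suc r) 1 @ d) m = 1 + q (replicate r 1 @ d) (m-1)" using Suc.prems by simp
  also have "\<dots> = Suc r + q d (m - Suc r)" using Suc.prems Suc.IH[of "m-1"] by simp
  finally show ?case .
qed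

definition inc_head :: "nat list \<Rightarrow> nat list" where
  "inc_head c = (case c of [] \<Rightarrow> [] | b # r \<Rightarrow> Suc b # r)"

lemma compositions_0: "compositions 0 = {[]}"
  by (auto simp: compositions_def) (case_tac x, auto)

lemma compositions_Suc:
  assumes "N \<ge> 1"
  shows "compositions (Suc N) = Cons 1 ` compositions N \<union> inc_head ` compositions N"
proof (intro set_eqI iffI)
  fix c assume c: "c \<in> compositions (Suc N)"
  then obtain b r where cb: "c = b # r" by (cases c) (auto simp: compositions_def)
  show "c \<in> Cons 1 ` compositions N \<union> inc_head ` compositions N"
  proof (cases "b = 1")
    case True
    then show ?thesis using c cb by (auto simp: compositions_def)
  next
    case False
    then have "b > 1" using c cb by (auto simp: compositions_def)
    then have "(b - 1) # r \<in> compositions N" "c = inc_head ((b - 1) # r)"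
      using c cb by (auto simp: compositions_def inc_head_def)
    then show ?thesis by blast
  qed
next
  fix c assume "c \<in> Cons 1 ` compositions N \<union> inc_head ` compositions N"
  then show "c \<in> compositions (Suc N)"
  proof
    assume "c \<in> Cons 1 ` compositions N" then show ?thesis by (auto simp: compositions_def)
  next
    assume "c \<in> inc_head ` compositions N"
    then obtain d where d: "d \<in> compositions N" "c = inc_head d" by auto
    then obtain b r where "d = b # r" using assms by (cases d) (auto simp: compositions_def)
    then show ?thesis using d by (auto simp: compositions_def inc_head_def)
  qed
qed

lemma finite_compositions: "finite (compositions N)"
proof (induction N)
  case 0 then show ?case by (simp add: compositions_0)
next
  case (Suc N)
  show ?case
  proof (cases "N = 0")
    case True
    have "compositions (Suc 0) = {[1]}"
    proof (intro set_eqI iffI)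
      fix c assume c: "c \<in> compositions (Suc 0)"
      then obtain b r where cb: "c = b # r" by (cases c) (auto simp: compositions_def)
      then show "c \<in> {[1]}" using c by (cases r) (auto simp: compositions_def)
    qed (auto simp: compositions_def)
    then show ?thesis using True by simp
  next
    case False
    then show ?thesis using Suc by (simp add: compositions_Suc)
  qed
qed

lemma compositions_1: "compositions (Suc 0) = {[1]}"
proof (intro set_eqI iffI)
  fix c assume c: "c \<in> compositions (Suc 0)"
  then obtain b r where cb: "c = b # r" by (cases c) (auto simp: compositions_def)
  then show "c \<in> {[1]}" using c by (cases r) (auto simp: compositions_def)
qed (auto simp: compositions_def)

lemma compositions_nonempty: "c \<in> compositions N \<Longrightarrow> N \<ge> 1 \<Longrightarrow> c \<noteq> []"
  by (auto simp: compositions_def)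

lemma inc_head_inj: "inj_on inc_head (compositions N)"
  by (auto simp: inj_on_def inc_head_def compositions_def split: list.splits)

lemma disjoint_images: "N \<ge> 1 \<Longrightarrow> Cons 1 ` compositions N \<inter> inc_head ` compositions N = {}"
  by (auto simp: inc_head_def compositions_def split: list.splits)

definition Phi :: "nat \<Rightarrow> (nat \<Rightarrow> nat \<Rightarrow> complex) \<Rightarrow> nat \<Rightarrow> real \<Rightarrow> complex" where
  "Phi n D j s = (\<Sum>c\<in>compositions (Suc n - j). comp_sign c *
      (\<Prod>m=j..n. \<i> / D m (j + q c (Suc m - j))) * (exp (- \<i> * of_real s * D j (j + q c 1)) - 1))"

definition Pp :: "nat \<Rightarrow> (nat \<Rightarrow> nat \<Rightarrow> complex) \<Rightarrow> nat \<Rightarrow> nat list \<Rightarrow> complex" where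
  "Pp n D j c = (\<Prod>m=j..n. \<i> / D m (j + q c (Suc m - j)))"

lemma Phi_Pp: "Phi n D j s = (\<Sum>c\<in>compositions (Suc n - j). comp_sign c *
      Pp n D j c * (exp (- \<i> * of_real s * D j (j + q c 1)) - 1))"
  unfolding Phi_def Pp_def ..

lemma Phi_split:
  assumes "j < n"
  shows "Phi n D j s = (\<Sum>c\<in>compositions (n - j). comp_sign c * Pp n D (Suc j) c *
     (\<i> / D j (Suc j + q c 1) * (exp (- \<i> * of_real s * D j (Suc j + q c 1)) - 1)
      - \<i> / D j (Suc j) * (exp (- \<i> * of_real s * D j (Suc j)) - 1)))"
proof -
  let ?N = "n - j"
  have N1: "?N \<ge> 1" using assms by simp
  have SN: "Suc n - j = Suc ?N" using assms by simp
  define T where "T c = comp_sign c *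
      (\<Prod>m=j..n. \<i> / D m (j + q c (Suc m - j))) * (exp (- \<i> * of_real s * D j (j + q c 1)) - 1)" for c
  have "Phi n D j s = sum T (compositions (Suc ?N))"
    unfolding Phi_def T_def SN ..
  also have "\<dots> = sum T (Cons 1 ` compositions ?N) + sum T (inc_head ` compositions ?N)"
    unfolding compositions_Suc[OF N1]
    by (intro sum.union_disjoint finite_imageI finite_compositions disjoint_images[OF N1])
  also have "\<dots> = sum (\<lambda>c. T (1 # c)) (compositions ?N) + sum (\<lambda>c. T (inc_head c)) (compositions ?N)"
    by (subst sum.reindex, simp add: inj_on_def, subst sum.reindex[OF inc_head_inj], simp add: comp_def)
  also have "\<dots> = sum (\<lambda>c. T (1 # c) + T (inc_head c)) (compositions ?N)"
    by (simp add: sum.distrib)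
  also have "\<dots> = (\<Sum>c\<in>compositions (n - j). comp_sign c * Pp n D (Suc j) c *
     (\<i> / D j (Suc j + q c 1) * (exp (- \<i> * of_real s * D j (Suc j + q c 1)) - 1)
      - \<i> / D j (Suc j) * (exp (- \<i> * of_real s * D j (Suc j)) - 1)))"
  proof (rule sum.cong[OF refl])
    fix c assume c: "c \<in> compositions ?N"
    then obtain b r where cb: "c = b # r" using N1 by (cases c) (auto simp: compositions_def)
    have b1: "b \<ge> 1" using c cb by (auto simp: compositions_def)
    have jn: "j \<le> n" using assms by simp
    have s1: "comp_sign (1 # c) = - comp_sign c"
      using cb by (simp add: comp_sign_def)
    have s2: "comp_sign (inc_head c) = comp_sign c"
      using cb by (simp add: comp_sign_def inc_head_def)
    have p1: "(\<Prod>m=j..n. \<i> / D m (j + q (1 # c) (Suc m - j))) = \<i> / D j (Suc j) * Pp n D (Suc j) c"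
      unfolding prod.atLeast_Suc_atMost[OF jn] Pp_def
      by (auto intro!: prod.cong simp: Suc_diff_le)
    have p2: "(\<Prod>m=j..n. \<i> / D m (j + q (inc_head c) (Suc m - j))) = \<i> / D j (Suc j + q c 1) * Pp n D (Suc j) c"
      unfolding prod.atLeast_Suc_atMost[OF jn] Pp_def using b1
      by (auto intro!: prod.cong simp: Suc_diff_le cb inc_head_def)
    have e1: "q (1 # c) 1 = 1" by simp
    have e2: "j + q (inc_head c) 1 = Suc j + q c 1" using b1 by (simp add: cb inc_head_def)
    show "T (1 # c) + T (inc_head c) = comp_sign c * Pp n D (Suc j) c *
     (\<i> / D j (Suc j + q c 1) * (exp (- \<i> * of_real s * D j (Suc j + q c 1)) - 1)
      - \<i> / D j (Suc j) * (exp (- \<i> * of_real s * D j (Suc j)) - 1))"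
      unfolding T_def s1 s2 p1 p2 e1 e2 by (simp add: divide_inverse algebra_simps)
  qed
  finally show ?thesis .
qed

lemma iei: "\<i> * (e * \<i>) = - (e::complex)"
  by (metis complex_i_mult_minus mult.commute)

lemma deriv_term:
  assumes "X \<noteq> 0"
  shows "((\<lambda>z. \<i> / X * exp (- \<i> * z * X)) has_field_derivative exp (- \<i> * z * X)) (at z)"
  using assms by (auto intro!: derivative_eq_intros simp: iei)

lemma int_sum:
  fixes K X :: "'c \<Rightarrow> complex" and Y :: complex
  assumes "finite C" "\<forall>c\<in>C. X c \<noteq> 0" "Y \<noteq> 0" "s \<ge> 0"
  shows "(LINT u:{0..s}|lborel. (\<Sum>c\<in>C. K c * (exp (- \<i> * of_real u * X c) - exp (- \<i> * of_real u * Y))))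
     = (\<Sum>c\<in>C. K c * (\<i> / X c * (exp (- \<i> * of_real s * X c) - 1) - \<i> / Y * (exp (- \<i> * of_real s * Y) - 1)))"
proof -
  define G where "G z = (\<Sum>c\<in>C. K c * (\<i> / X c * exp (- \<i> * z * X c) - \<i> / Y * exp (- \<i> * z * Y)))" for z
  define g where "g z = (\<Sum>c\<in>C. K c * (exp (- \<i> * z * X c) - exp (- \<i> * z * Y)))" for z
  have dG: "(G has_field_derivative g z) (at z)" for z
    unfolding G_def g_def
    by (intro DERIV_sum DERIV_cmult DERIV_diff deriv_term) (use assms in auto)
  have "(LINT u:{0..s}|lborel. g (of_real u)) = G (of_real s) - G (of_real 0)"
    unfolding set_lebesgue_integral_def
  proof (rule integral_FTC_atLeastAtMost[OF assms(4)])
    fix x :: real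
    show "((\<lambda>u. G (of_real u)) has_vector_derivative g (of_real x)) (at x within {0..s})"
      by (rule has_vector_derivative_at_within, rule has_vector_derivative_real_field, rule dG)
  next
    show "continuous_on {0..s} (\<lambda>u. g (complex_of_real u))"
      unfolding g_def by (intro continuous_intros)
  qed
  also have "G (of_real s) - G (of_real 0) = (\<Sum>c\<in>C. K c * (\<i> / X c * (exp (- \<i> * of_real s * X c) - 1) - \<i> / Y * (exp (- \<i> * of_real s * Y) - 1)))"
    unfolding G_def by (simp add: sum_subtractf[symmetric] algebra_simps)
  finally show ?thesis unfolding g_def by simp
qed

lemma int_exp:
  assumes "X \<noteq> 0" "s \<ge> 0"
  shows "(LINT u:{0..s}|lborel. exp (- \<i> * of_real u * X)) = \<i> / X * (exp (- \<i> * of_real s * X) - 1)"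
proof -
  have "(LINT u:{0..s}|lborel. exp (- \<i> * of_real u * X)) = (\<i> / X * exp (- \<i> * of_real s * X)) - (\<i> / X * exp (- \<i> * of_real 0 * X))"
    unfolding set_lebesgue_integral_def
  proof (rule integral_FTC_atLeastAtMost[OF assms(2)])
    fix x :: real
    show "((\<lambda>u. \<i> / X * exp (- \<i> * of_real u * X)) has_vector_derivative exp (- \<i> * of_real x * X)) (at x within {0..s})"
      by (rule has_vector_derivative_at_within, rule has_vector_derivative_real_field[where f="\<lambda>z. \<i> / X * exp (- \<i> * z * X)"], rule deriv_term[OF assms(1)])
  next
    show "continuous_on {0..s} (\<lambda>u. exp (- \<i> * of_real u * X))"
      by (intro continuous_intros)
  qed
  then show ?thesis by (simp add: algebra_simps)
qed

abbreviation PM :: "nat set \<Rightarrow> (nat \<Rightarrow> real) measure" where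
  "PM I \<equiv> PiM I (\<lambda>_. lborel)"

definition Sx :: "nat \<Rightarrow> nat \<Rightarrow> real \<Rightarrow> (nat \<Rightarrow> real) set" where
  "Sx n j s = {x \<in> space (PM {j..n}). \<forall>m\<in>{j..n}. 0 \<le> x m \<and> x m \<le> s \<and> (j < m \<longrightarrow> x m \<le> x (m - 1))}"

definition Fi :: "nat \<Rightarrow> (nat \<Rightarrow> complex) \<Rightarrow> nat \<Rightarrow> real \<Rightarrow> complex" where
  "Fi n a j s = (LINT x : Sx n j s | PM {j..n}. (\<Prod>m=j..n. exp (- \<i> * of_real (x m) * a m)))"

interpretation PS: product_sigma_finite "\<lambda>_::nat. lborel :: real measure"
  by standard

lemma Sx_sets: "Sx n j s \<in> sets (PM {j..n})"
  unfolding Sx_def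
proof (rule sets.sets_Collect_finite_All)
  fix m assume m: "m \<in> {j..n}"
  show "{x \<in> space (PM {j..n}). 0 \<le> x m \<and> x m \<le> s \<and> (j < m \<longrightarrow> x m \<le> x (m - 1))} \<in> sets (PM {j..n})"
  proof (cases "j < m")
    case True
    then have m1: "m - 1 \<in> {j..n}" using m by auto
    have [measurable]: "(\<lambda>x. x m) \<in> borel_measurable (PM {j..n})" "(\<lambda>x. x (m - 1)) \<in> borel_measurable (PM {j..n})"
      using m m1 by (auto intro!: measurable_component_singleton)
    let ?M = "PM {j..n}"
    have comp: "(\<lambda>x. x i) \<in> borel_measurable ?M" if "i \<in> {j..n}" for i
      using measurable_component_singleton[OF that, of "\<lambda>_. lborel"] by simp
    have A: "(\<lambda>x. x m) \<in> borel_measurable ?M" "(\<lambda>x. x (m - 1)) \<in> borel_measurable ?M"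
      "(\<lambda>x. 0::real) \<in> borel_measurable ?M" "(\<lambda>x. s) \<in> borel_measurable ?M"
      using comp[OF m] comp[OF m1] by auto
    have "{x \<in> space ?M. 0 \<le> x m \<and> x m \<le> s \<and> (j < m \<longrightarrow> x m \<le> x (m - 1))}
      = {x \<in> space ?M. 0 \<le> x m} \<inter> {x \<in> space ?M. x m \<le> s} \<inter> {x \<in> space ?M. x m \<le> x (m - 1)}"
      using True by auto
    moreover have "{x \<in> space ?M. 0 \<le> x m} \<in> sets ?M"
      using borel_measurable_le[OF A(3) A(1)] .
    moreover have "{x \<in> space ?M. x m \<le> s} \<in> sets ?M"
      using borel_measurable_le[OF A(1) A(4)] .
    moreover have "{x \<in> space ?M. x m \<le> x (m - 1)} \<in> sets ?M"
      using borel_measurable_le[OF A(1) A(2)] .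
    ultimately show ?thesis by simp
  next
    case False
    have [measurable]: "(\<lambda>x. x m) \<in> borel_measurable (PM {j..n})"
      using m by (auto intro!: measurable_component_singleton)
    show ?thesis using False by simp
  qed
qed simp

lemma integrand_meas:
  "(\<lambda>x. \<Prod>m=j..n. exp (- \<i> * of_real (x m) * a m)) \<in> borel_measurable (PM {j..n})"
proof (rule borel_measurable_prod)
  fix m assume m: "m \<in> {j..n}"
  show "(\<lambda>x. exp (- \<i> * of_real (x m) * a m)) \<in> borel_measurable (PM {j..n})"
    using m by (auto intro!: borel_measurable_continuous_on[where f="\<lambda>r. exp (- \<i> * of_real r * a m)"] continuous_intros measurable_component_singleton)
qed

lemma Sx_sub: "Sx n j s \<subseteq> PiE {j..n} (\<lambda>_. {0..s})"
  unfolding Sx_def space_PiM by (auto simp: PiE_iff extensional_def)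

lemma Sx_finite: "emeasure (PM {j..n}) (Sx n j s) < \<infinity>"
proof -
  have "emeasure (PM {j..n}) (Sx n j s) \<le> emeasure (PM {j..n}) (PiE {j..n} (\<lambda>_. {0..s}))"
    by (rule emeasure_mono[OF Sx_sub]) (auto intro!: sets_PiM_I_finite)
  also have "\<dots> = (\<Prod>i\<in>{j..n}. emeasure lborel {0..s})"
    by (rule PS.emeasure_PiM) auto
  also have "\<dots> < \<infinity>" by (auto simp: emeasure_lborel_Icc_eq power_less_top_ennreal power_0_left)
  finally show ?thesis .
qed

lemma Fi_integrable:
  "integrable (PM {j..n}) (\<lambda>x. indicator (Sx n j s) x *\<^sub>R (\<Prod>m=j..n. exp (- \<i> * of_real (x m) * a m)))"
proof (rule integrableI_bounded_set[where A="Sx n j s" and B="\<Prod>m\<in>{j..n}. exp (s * norm (a m))"])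
  show "Sx n j s \<in> sets (PM {j..n})" by (rule Sx_sets)
  show "(\<lambda>x. indicator (Sx n j s) x *\<^sub>R (\<Prod>m=j..n. exp (- \<i> * of_real (x m) * a m))) \<in> borel_measurable (PM {j..n})"
    by (intro borel_measurable_scaleR borel_measurable_indicator Sx_sets integrand_meas)
  show "emeasure (PM {j..n}) (Sx n j s) < \<infinity>" by (rule Sx_finite)
  show "AE x in PM {j..n}. x \<notin> Sx n j s \<longrightarrow> indicator (Sx n j s) x *\<^sub>R (\<Prod>m=j..n. exp (- \<i> * of_real (x m) * a m)) = 0"
    by simp
  show "AE x in PM {j..n}. x \<in> Sx n j s \<longrightarrow> norm (indicator (Sx n j s) x *\<^sub>R (\<Prod>m=j..n. exp (- \<i> * of_real (x m) * a m))) \<le> (\<Prod>m\<in>{j..n}. exp (s * norm (a m)))"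
  proof (rule AE_I2, rule impI)
    fix x assume x: "x \<in> Sx n j s"
    have "norm (indicator (Sx n j s) x *\<^sub>R (\<Prod>m=j..n. exp (- \<i> * of_real (x m) * a m)))
        = norm (\<Prod>m=j..n. exp (- \<i> * of_real (x m) * a m))" using x by simp
    also have "\<dots> \<le> (\<Prod>m=j..n. norm (exp (- \<i> * of_real (x m) * a m)))" by (rule norm_prod_le)
    also have "\<dots> \<le> (\<Prod>m\<in>{j..n}. exp (s * norm (a m)))"
    proof (rule prod_mono, rule conjI)
      fix m assume m: "m \<in> {j..n}"
      have b: "0 \<le> x m" "x m \<le> s" using x m by (auto simp: Sx_def)
      have "x m * Im (a m) \<le> x m * norm (a m)"
        using b by (intro mult_left_mono) (auto simp: abs_Im_le_cmod intro: order_trans[OF abs_ge_self])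
      also have "\<dots> \<le> s * norm (a m)" using b by (intro mult_right_mono) auto
      finally have "x m * Im (a m) \<le> s * norm (a m)" .
      then show "norm (exp (- \<i> * of_real (x m) * a m)) \<le> exp (s * norm (a m))"
        by (simp add: norm_exp_eq_Re)
    qed simp
    finally show "norm (indicator (Sx n j s) x *\<^sub>R (\<Prod>m=j..n. exp (- \<i> * of_real (x m) * a m))) \<le> (\<Prod>m\<in>{j..n}. exp (s * norm (a m)))" .
  qed
qed

lemma chain_le_aux:
  fixes y :: "nat \<Rightarrow> real"
  shows "(\<forall>m. i < m \<longrightarrow> m \<le> n \<longrightarrow> y m \<le> y (m - 1)) \<longrightarrow> i \<le> k \<longrightarrow> k \<le> n \<longrightarrow> y k \<le> y i"
proof (induction k)
  case 0 then show ?case by simp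
next
  case (Suc k)
  show ?case
  proof (intro impI)
    assume H: "\<forall>m. i < m \<longrightarrow> m \<le> n \<longrightarrow> y m \<le> y (m - 1)" and a: "i \<le> Suc k" and b: "Suc k \<le> n"
    show "y (Suc k) \<le> y i"
    proof (cases "Suc k = i")
      case True then show ?thesis by simp
    next
      case False
      then have "i \<le> k" using a by simp
      then have "y k \<le> y i" using Suc.IH H b by simp
      moreover have "y (Suc k) \<le> y (Suc k - 1)" using H a b False by (metis le_neq_implies_less)
      ultimately show ?thesis by simp
    qed
  qed
qed

lemma chain_le:
  fixes y :: "nat \<Rightarrow> real"
  assumes "\<And>m. i < m \<Longrightarrow> m \<le> n \<Longrightarrow> y m \<le> y (m - 1)" "i \<le> k" "k \<le> n"
  shows "y k \<le> y i"
  using chain_le_aux[of i n y k] assms by blast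

lemma Sx_upd:
  assumes jn: "j \<le> n" and y: "y \<in> space (PM {Suc j..n})" and us: "u \<le> s"
  shows "y(j := u) \<in> Sx n j s \<longleftrightarrow> u \<in> {0..s} \<and> y \<in> Sx n (Suc j) u"
proof -
  have sp: "y(j := u) \<in> space (PM {j..n})"
    using y jn unfolding space_PiM by (auto simp: PiE_iff extensional_def)
  have yj: "y j = undefined" using y unfolding space_PiM by (auto simp: PiE_iff extensional_def)
  show ?thesis
  proof
    assume A: "y(j := u) \<in> Sx n j s"
    then have A': "\<forall>m\<in>{j..n}. 0 \<le> (y(j := u)) m \<and> (y(j := u)) m \<le> s \<and> (j < m \<longrightarrow> (y(j := u)) m \<le> (y(j := u)) (m - 1))"
      by (simp add: Sx_def)
    have u: "u \<in> {0..s}" using A'[rule_format, of j] jn by simp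
    have ch: "y m \<le> y (m - 1)" if "Suc j < m" "m \<le> n" for m
      using A'[rule_format, of m] that by (auto split: if_splits)
    have y1: "y (Suc j) \<le> u" if "Suc j \<le> n"
      using A'[rule_format, of "Suc j"] that by auto
    have "\<forall>m\<in>{Suc j..n}. 0 \<le> y m \<and> y m \<le> u \<and> (Suc j < m \<longrightarrow> y m \<le> y (m - 1))"
    proof
      fix m assume m: "m \<in> {Suc j..n}"
      have "0 \<le> y m" using A'[rule_format, of m] m by auto
      moreover have "y m \<le> y (Suc j)" using chain_le[of "Suc j" n y m, OF ch] m by auto
      moreover have "y (Suc j) \<le> u" using y1 m by auto
      ultimately show "0 \<le> y m \<and> y m \<le> u \<and> (Suc j < m \<longrightarrow> y m \<le> y (m - 1))"
        using ch m by auto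
    qed
    then show "u \<in> {0..s} \<and> y \<in> Sx n (Suc j) u" using u y by (simp add: Sx_def)
  next
    assume B: "u \<in> {0..s} \<and> y \<in> Sx n (Suc j) u"
    then have B': "\<forall>m\<in>{Suc j..n}. 0 \<le> y m \<and> y m \<le> u \<and> (Suc j < m \<longrightarrow> y m \<le> y (m - 1))"
      by (simp add: Sx_def)
    have "\<forall>m\<in>{j..n}. 0 \<le> (y(j := u)) m \<and> (y(j := u)) m \<le> s \<and> (j < m \<longrightarrow> (y(j := u)) m \<le> (y(j := u)) (m - 1))"
    proof
      fix m assume m: "m \<in> {j..n}"
      show "0 \<le> (y(j := u)) m \<and> (y(j := u)) m \<le> s \<and> (j < m \<longrightarrow> (y(j := u)) m \<le> (y(j := u)) (m - 1))"
      proof (cases "m = j")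
        case True then show ?thesis using B by simp
      next
        case False
        then have m': "m \<in> {Suc j..n}" using m by auto
        have "y m \<le> y (m - 1)" if "Suc j < m" using B'[rule_format, OF m'] that by simp
        moreover have "y m \<le> u" using B'[rule_format, OF m'] by simp
        ultimately show ?thesis using B'[rule_format, OF m'] False us m'
          by (cases "m = Suc j") auto
      qed
    qed
    then show "y(j := u) \<in> Sx n j s" using sp by (simp add: Sx_def)
  qed
qed

lemma Fi_last: "Fi n a (Suc n) u = 1"
  by (simp add: Fi_def Sx_def set_lebesgue_integral_def PiM_empty lebesgue_integral_count_space_finite)

lemma merge_upd:
  assumes "y \<in> space (PM J)" "j \<notin> J"
  shows "merge {j} J (x, y) = y(j := x j)"
  using assms unfolding space_PiM by (auto simp: merge_def PiE_iff extensional_def fun_eq_iff)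

lemma step:
  assumes jn: "j \<le> n" and s: "0 \<le> s" and phi: "\<phi> \<in> borel_measurable lborel"
    and eq: "\<forall>u\<in>{0..s}. Fi n a (Suc j) u = \<phi> u"
  shows "Fi n a j s = (LINT u:{0..s}|lborel. exp (- \<i> * of_real u * a j) * \<phi> u)"
proof -
  define g where "g x = indicator (Sx n j s) x *\<^sub>R (\<Prod>m=j..n. exp (- \<i> * of_real (x m) * a m))" for x
  define J where "J = {Suc j..n}"
  define h where "h u = indicator {0..s} u *\<^sub>R (exp (- \<i> * of_real u * a j) * \<phi> u)" for u
  have IJ: "{j..n} = {j} \<union> J" using jn by (auto simp: J_def)
  have jJ: "j \<notin> J" by (simp add: J_def)
  have "Fi n a j s = integral\<^sup>L (PM {j..n}) g" by (simp add: Fi_def set_lebesgue_integral_def g_def[abs_def])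
  also have "\<dots> = integral\<^sup>L (PM ({j} \<union> J)) g" by (simp only: IJ)
  also have "\<dots> = (\<integral>x. (\<integral>y. g (merge {j} J (x, y)) \<partial>PM J) \<partial>PM {j})"
  proof (rule PS.product_integral_fold)
    show "{j} \<inter> J = {}" using jJ by simp
    show "integrable (PM ({j} \<union> J)) g" unfolding IJ[symmetric] g_def[abs_def] by (rule Fi_integrable)
  qed (auto simp: J_def)
  also have "\<dots> = (\<integral>x. h (x j) \<partial>PM {j})"
  proof (rule Bochner_Integration.integral_cong[OF refl])
    fix x assume x: "x \<in> space (PM {j})"
    define u where "u = x j"
    have "(\<integral>y. g (merge {j} J (x, y)) \<partial>PM J) = (\<integral>y. g (y(j := u)) \<partial>PM J)"
      by (rule Bochner_Integration.integral_cong[OF refl]) (simp add: merge_upd[OF _ jJ] u_def)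
    also have "\<dots> = (\<integral>y. indicator {0..s} u *\<^sub>R (exp (- \<i> * of_real u * a j) *
        (indicator (Sx n (Suc j) u) y *\<^sub>R (\<Prod>m=Suc j..n. exp (- \<i> * of_real (y m) * a m)))) \<partial>PM J)"
    proof (rule Bochner_Integration.integral_cong[OF refl])
      fix y assume y: "y \<in> space (PM J)"
      have pr: "(\<Prod>m=j..n. exp (- \<i> * of_real ((y(j := u)) m) * a m))
          = exp (- \<i> * of_real u * a j) * (\<Prod>m=Suc j..n. exp (- \<i> * of_real (y m) * a m))"
        unfolding prod.atLeast_Suc_atMost[OF jn] by (auto intro!: prod.cong)
      show "g (y(j := u)) = indicator {0..s} u *\<^sub>R (exp (- \<i> * of_real u * a j) *
        (indicator (Sx n (Suc j) u) y *\<^sub>R (\<Prod>m=Suc j..n. exp (- \<i> * of_real (y m) * a m))))"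
      proof (cases "u \<le> s")
        case True
        have mem: "y(j := u) \<in> Sx n j s \<longleftrightarrow> u \<in> {0..s} \<and> y \<in> Sx n (Suc j) u"
          using Sx_upd[OF jn _ True] y by (simp add: J_def)
        show ?thesis unfolding g_def pr using mem by (auto simp: indicator_def)
      next
        case False
        have "y(j := u) \<notin> Sx n j s" using False jn by (auto simp: Sx_def)
        then show ?thesis unfolding g_def using False by simp
      qed
    qed
    also have "\<dots> = indicator {0..s} u *\<^sub>R (exp (- \<i> * of_real u * a j) *
        (\<integral>y. indicator (Sx n (Suc j) u) y *\<^sub>R (\<Prod>m=Suc j..n. exp (- \<i> * of_real (y m) * a m)) \<partial>PM J))"
      by (simp only: integral_scaleR_right integral_mult_right_zero)
    also have "\<dots> = indicator {0..s} u *\<^sub>R (exp (- \<i> * of_real u * a j) * Fi n a (Suc j) u)"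
      unfolding Fi_def set_lebesgue_integral_def J_def ..
    also have "\<dots> = h u"
      unfolding h_def using eq by (cases "u \<in> {0..s}") auto
    finally show "(\<integral>y. g (merge {j} J (x, y)) \<partial>PM J) = h (x j)" by (simp add: u_def)
  qed
  also have "\<dots> = integral\<^sup>L lborel h"
    by (rule PS.product_integral_singleton) (unfold h_def, use phi in measurable)
  also have "\<dots> = (LINT u:{0..s}|lborel. exp (- \<i> * of_real u * a j) * \<phi> u)"
    by (simp add: set_lebesgue_integral_def h_def[abs_def])
  finally show ?thesis .
qed

lemma main_abstract:
  fixes D :: "nat \<Rightarrow> nat \<Rightarrow> complex" and a :: "nat \<Rightarrow> complex"
  assumes add: "\<And>m p. m < p \<Longrightarrow> D m p = D m (Suc m) + D (Suc m) p"
    and nz: "\<And>m p. 1 \<le> m \<Longrightarrow> m < p \<Longrightarrow> p \<le> Suc n \<Longrightarrow> D m p \<noteq> 0"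
    and a: "\<And>m. a m = D m (Suc m)"
  shows "d < n \<Longrightarrow> \<forall>s\<ge>0. Fi n a (n - d) s = Phi n D (n - d) s"
proof (induction d)
  case 0
  show ?case
  proof (intro allI impI)
    fix s :: real assume s: "0 \<le> s"
    have "Fi n a n s = (LINT u:{0..s}|lborel. exp (- \<i> * of_real u * a n) * 1)"
      by (rule step) (use s in \<open>auto simp: Fi_last\<close>)
    also have "\<dots> = \<i> / a n * (exp (- \<i> * of_real s * a n) - 1)"
      using int_exp[of "a n" s] s nz[of n "Suc n"] 0 by (simp add: a)
    also have "\<dots> = Phi n D n s"
      by (simp add: Phi_def compositions_1 comp_sign_def a)
    finally show "Fi n a (n - 0) s = Phi n D (n - 0) s" by simp
  qed
next
  case (Suc d)
  define j where "j = n - Suc d"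
  have jn: "j < n" "1 \<le> j" using Suc.prems by (auto simp: j_def)
  have Sj: "n - d = Suc j" using Suc.prems by (simp add: j_def)
  have IH: "\<forall>s\<ge>0. Fi n a (Suc j) s = Phi n D (Suc j) s" using Suc.IH Suc.prems Sj by simp
  define K where "K c = comp_sign c * Pp n D (Suc j) c" for c
  define X where "X c = D j (Suc j + q c 1)" for c
  define Y where "Y = D j (Suc j)"
  have nj: "Suc n - Suc j = n - j" by simp
  have integrand: "(\<lambda>u. exp (- \<i> * of_real u * a j) * Phi n D (Suc j) u)
      = (\<lambda>u. \<Sum>c\<in>compositions (n - j). K c * (exp (- \<i> * of_real u * X c) - exp (- \<i> * of_real u * Y)))"
  proof
    fix u :: real
    have "exp (- \<i> * of_real u * a j) * Phi n D (Suc j) u =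
       (\<Sum>c\<in>compositions (n - j). exp (- \<i> * of_real u * a j) * (comp_sign c * Pp n D (Suc j) c *
          (exp (- \<i> * of_real u * D (Suc j) (Suc j + q c 1)) - 1)))"
      unfolding Phi_Pp nj by (simp add: sum_distrib_left)
    also have "\<dots> = (\<Sum>c\<in>compositions (n - j). K c * (exp (- \<i> * of_real u * X c) - exp (- \<i> * of_real u * Y)))"
    proof (rule sum.cong[OF refl])
      fix c
      have XY: "X c = Y + D (Suc j) (Suc j + q c 1)"
        unfolding X_def Y_def by (rule add) simp
      show "exp (- \<i> * of_real u * a j) * (comp_sign c * Pp n D (Suc j) c *
          (exp (- \<i> * of_real u * D (Suc j) (Suc j + q c 1)) - 1)) =
          K c * (exp (- \<i> * of_real u * X c) - exp (- \<i> * of_real u * Y))"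
      proof -
        define Z where "Z = D (Suc j) (Suc j + q c 1)"
        have ar: "- \<i> * of_real u * (Y + Z) = (- \<i> * of_real u * Y) + (- \<i> * of_real u * Z)"
          by (simp add: algebra_simps)
        have e: "exp (- \<i> * of_real u * (Y + Z)) = exp (- \<i> * of_real u * Y) * exp (- \<i> * of_real u * Z)"
          unfolding ar by (rule exp_add)
        show ?thesis
          unfolding XY K_def a Y_def[symmetric] Z_def[symmetric] e
          by (simp add: algebra_simps)
      qed
    qed
    finally show "exp (- \<i> * of_real u * a j) * Phi n D (Suc j) u =
       (\<Sum>c\<in>compositions (n - j). K c * (exp (- \<i> * of_real u * X c) - exp (- \<i> * of_real u * Y)))" .
  qed
  show ?case
  proof (intro allI impI)
    fix s :: real assume s: "0 \<le> s"
    have meas: "Phi n D (Suc j) \<in> borel_measurable lborel"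
      unfolding Phi_def[abs_def] by measurable
    have "Fi n a j s = (LINT u:{0..s}|lborel. exp (- \<i> * of_real u * a j) * Phi n D (Suc j) u)"
      by (rule step) (use s jn IH meas in auto)
    also have "\<dots> = (LINT u:{0..s}|lborel. (\<Sum>c\<in>compositions (n - j). K c * (exp (- \<i> * of_real u * X c) - exp (- \<i> * of_real u * Y))))"
      by (simp only: integrand)
    also have "\<dots> = (\<Sum>c\<in>compositions (n - j). K c * (\<i> / X c * (exp (- \<i> * of_real s * X c) - 1) - \<i> / Y * (exp (- \<i> * of_real s * Y) - 1)))"
    proof (rule int_sum)
      show "finite (compositions (n - j))" by (rule finite_compositions)
      show "\<forall>c\<in>compositions (n - j). X c \<noteq> 0"
      proof
        fix c assume c: "c \<in> compositions (n - j)"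
        have "q c 1 \<le> n - j" using q_le_sum[of c 1] c by (simp add: compositions_def)
        then show "X c \<noteq> 0" unfolding X_def using jn by (intro nz) auto
      qed
      show "Y \<noteq> 0" unfolding Y_def using jn by (intro nz) auto
    qed (use s in auto)
    also have "\<dots> = Phi n D j s"
      unfolding Phi_split[OF jn(1)] K_def X_def Y_def by (simp add: algebra_simps)
    finally show "Fi n a (n - Suc d) s = Phi n D (n - Suc d) s" by (simp add: j_def)
  qed
qed

theorem mainTheorem1:
  fixes n :: nat and lam t :: real and E k :: "nat \<Rightarrow> complex"
  assumes "n \<ge> 1" and "t \<ge> 0"
    and "\<forall>c\<in>compositions n. \<forall>j\<in>{1..n}.
           E (comp_p c j) - E j + \<i> * of_real lam * comp_k k c j \<noteq> 0"
  shows "(LINT x : ordered_simplex n t | PiM {1..n} (\<lambda>_. lborel).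
            (\<Prod>j=1..n. exp (- \<i> * of_real (x j) * (E (j+1) - E j + \<i> * of_real lam * k j))))
       = (\<Sum>c\<in>compositions n. comp_sign c *
            (\<Prod>j=1..n. \<i> / (E (comp_p c j) - E j + \<i> * of_real lam * comp_k k c j)) *
            (exp (- \<i> * of_real t * (E (comp_p c 1) - E 1 + \<i> * of_real lam * comp_k k c 1)) - 1))"
proof -
  note n1 = assms(1) and t0 = assms(2) and H = assms(3)
  define D where "D m p = E p - E m + \<i> * of_real lam * (\<Sum>l = m..p - 1. k l)" for m p
  define a where "a j = E (j+1) - E j + \<i> * of_real lam * k j" for j
  have add: "D m p = D m (Suc m) + D (Suc m) p" if "m < p" for m p
  proof -
    have "(\<Sum>l = m..p - 1. k l) = k m + (\<Sum>l = Suc m..p - 1. k l)"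
      using that by (intro sum.atLeast_Suc_atMost) simp
    then show ?thesis unfolding D_def by (simp add: algebra_simps)
  qed
  have aD: "a m = D m (Suc m)" for m
    by (simp add: a_def D_def)
  have nz: "D m p \<noteq> 0" if m: "1 \<le> m" "m < p" "p \<le> Suc n" for m p
  proof -
    define c where "c = replicate (m - 1) 1 @ [p - m] @ replicate (Suc n - p) (1::nat)"
    have c: "c \<in> compositions n"
      using m by (auto simp: c_def compositions_def sum_list_replicate)
    have "q c m = (m - 1) + q ([p - m] @ replicate (Suc n - p) 1) (m - (m - 1))"
      unfolding c_def using m by (intro q_replicate) simp
    also have "\<dots> = p - 1" using m by simp
    finally have "comp_p c m = p" using comp_p_q[OF c, of m] m by simp
    then have "E (comp_p c m) - E m + \<i> * of_real lam * comp_k k c m = D m p"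
      by (simp add: comp_k_def D_def)
    moreover have "E (comp_p c m) - E m + \<i> * of_real lam * comp_k k c m \<noteq> 0"
      using H c m by auto
    ultimately show ?thesis by simp
  qed
  have main: "\<forall>s\<ge>0. Fi n a (n - (n - 1)) s = Phi n D (n - (n - 1)) s"
    by (rule main_abstract[of D n a "n - 1", OF add nz aD]) (use n1 in auto)
  have n11: "n - (n - 1) = 1" using n1 by simp
  have simplex: "ordered_simplex n t = Sx n 1 t"
  proof (intro set_eqI iffI)
    fix x assume x: "x \<in> ordered_simplex n t"
    then have sp: "x \<in> space (PM {1..n})" and x0: "0 \<le> x n" and ch0: "\<And>j. 1 \<le> j \<Longrightarrow> j < n \<Longrightarrow> x (Suc j) \<le> x j"
      and xt: "x 1 \<le> t"
      by (auto simp: ordered_simplex_def)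
    have ch: "x m \<le> x (m - 1)" if "1 < m" "m \<le> n" for m
      using ch0[of "m - 1"] that by simp
    have "\<forall>m\<in>{1..n}. 0 \<le> x m \<and> x m \<le> t \<and> (1 < m \<longrightarrow> x m \<le> x (m - 1))"
    proof
      fix m assume m: "m \<in> {1..n}"
      have "x n \<le> x m" using chain_le[of m n x n] ch m by auto
      moreover have "x m \<le> x 1" using chain_le[of 1 n x m] ch m by auto
      ultimately show "0 \<le> x m \<and> x m \<le> t \<and> (1 < m \<longrightarrow> x m \<le> x (m - 1))"
        using x0 xt ch m by auto
    qed
    then show "x \<in> Sx n 1 t" using sp by (simp add: Sx_def)
  next
    fix x assume x: "x \<in> Sx n 1 t"
    then have sp: "x \<in> space (PM {1..n})"
      and A: "\<forall>m\<in>{1..n}. 0 \<le> x m \<and> x m \<le> t \<and> (1 < m \<longrightarrow> x m \<le> x (m - 1))"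
      by (auto simp: Sx_def)
    have "0 \<le> x n" using A n1 by auto
    moreover have "x (Suc j) \<le> x j" if "1 \<le> j" "j < n" for j
      using A[rule_format, of "Suc j"] that by auto
    moreover have "x 1 \<le> t" using A n1 by auto
    ultimately show "x \<in> ordered_simplex n t" using sp by (auto simp: ordered_simplex_def)
  qed
  have lhs: "(LINT x : ordered_simplex n t | PiM {1..n} (\<lambda>_. lborel).
            (\<Prod>j=1..n. exp (- \<i> * of_real (x j) * (E (j+1) - E j + \<i> * of_real lam * k j)))) = Fi n a 1 t"
    unfolding Fi_def simplex a_def ..
  have rhs: "Phi n D 1 t = (\<Sum>c\<in>compositions n. comp_sign c *
            (\<Prod>j=1..n. \<i> / (E (comp_p c j) - E j + \<i> * of_real lam * comp_k k c j)) *
            (exp (- \<i> * of_real t * (E (comp_p c 1) - E 1 + \<i> * of_real lam * comp_k k c 1)) - 1))"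
    unfolding Phi_def
  proof (rule sum.cong)
    fix c assume c: "c \<in> compositions n"
    have Dc: "D m (Suc (q c m)) = E (comp_p c m) - E m + \<i> * of_real lam * comp_k k c m"
      if "m \<in> {1..n}" for m
      using comp_p_q[OF c, of m] that by (simp add: D_def comp_k_def)
    have "(\<Prod>m=1..n. \<i> / D m (1 + q c (Suc m - 1))) = (\<Prod>j=1..n. \<i> / (E (comp_p c j) - E j + \<i> * of_real lam * comp_k k c j))"
      by (rule prod.cong) (simp_all add: Dc)
    moreover have "D 1 (1 + q c 1) = E (comp_p c 1) - E 1 + \<i> * of_real lam * comp_k k c 1"
      using Dc[of 1] n1 by simp
    ultimately show "comp_sign c * (\<Prod>m=1..n. \<i> / D m (1 + q c (Suc m - 1))) * (exp (- \<i> * of_real t * D 1 (1 + q c 1)) - 1)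
      = comp_sign c * (\<Prod>j=1..n. \<i> / (E (comp_p c j) - E j + \<i> * of_real lam * comp_k k c j)) *
            (exp (- \<i> * of_real t * (E (comp_p c 1) - E 1 + \<i> * of_real lam * comp_k k c 1)) - 1)"
      by simp
  qed simp
  show ?thesis
    unfolding lhs rhs[symmetric] using main t0 n11 by simp
qed

end
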